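(* Let $\kappa\ge3$ and $0<h\le\frac1{10000\pi^2\kappa}$, let $f_{\mathrm{hard}}$ and $\Omega_{\mathrm{hard}}$ be as defined below, and let $\pi^*$ be the probability measure with density proportional to $e^{-f_{\mathrm{hard}}}$. Then $\pi^*(\Omega_{\mathrm{hard}})\ge e^{-d}$, and $\|\nabla f_{\mathrm{hard}}(x)\|_2\le10\sqrt{\kappa d}$ for all $x\in\Omega_{\mathrm{hard}}$.
   Context: $f_{\mathrm{hard}}(x)=\sum_{i=1}^d f_i(x_i)$ with $f_1(c)=\frac12c^2$ and $f_i(c)=\frac\kappa3c^2-\frac{\kappa h}3\cos\frac c{\sqrt h}$ for $2\le i\le d$ (so $I\preceq\nabla^2 f_{\mathrm{hard}}\preceq\kappa I$). Let $K_h=\lfloor\frac{5}{\pi\sqrt{h\kappa}}\rfloor$ and $\Omega_{\mathrm{hard}}$ be the set of $x\in\mathbb{R}^d$ with $|x_1|\le2$ such that for every $2\le i\le d$ there is an integer $k_i$ with $|k_i|\le K_h$ and $-\frac9{20}\pi\sqrt h+2\pi k_i\sqrt h\le x_i\le\frac9{20}\pi\sqrt h+2\pi k_i\sqrt h$. *)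

theory Defs
  imports "HOL-Analysis.Analysis"
begin

text \<open>Points of R^d are vectors of type real^'n (d = CARD('n)); the distinguished
  "first" coordinate is an arbitrary fixed index i1.\<close>

definition f_hard :: "real \<Rightarrow> real \<Rightarrow> 'n::finite \<Rightarrow> real^'n \<Rightarrow> real" where
  "f_hard \<kappa> h i1 x = (\<Sum>i\<in>UNIV. if i = i1 then (x$i)^2 / 2
      else \<kappa>/3 * (x$i)^2 - \<kappa>*h/3 * cos (x$i / sqrt h))"

definition K_h :: "real \<Rightarrow> real \<Rightarrow> int" where
  "K_h \<kappa> h = \<lfloor>5 / (pi * sqrt (h * \<kappa>))\<rfloor>"

definition Omega_hard :: "real \<Rightarrow> real \<Rightarrow> 'n::finite \<Rightarrow> (real^'n) set" where
  "Omega_hard \<kappa> h i1 = {x. \<bar>x$i1\<bar> \<le> 2 \<and>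
     (\<forall>i. i \<noteq> i1 \<longrightarrow> (\<exists>k::int. \<bar>k\<bar> \<le> K_h \<kappa> h \<and>
        - (9/20) * pi * sqrt h + 2 * pi * k * sqrt h \<le> x$i \<and>
        x$i \<le> (9/20) * pi * sqrt h + 2 * pi * k * sqrt h))}"

definition pi_star :: "real \<Rightarrow> real \<Rightarrow> 'n::finite \<Rightarrow> (real^'n) measure" where
  "pi_star \<kappa> h i1 = density lborel (\<lambda>x. ennreal (exp (- f_hard \<kappa> h i1 x) /
      (\<integral>y. exp (- f_hard \<kappa> h i1 y) \<partial>lborel)))"

end

theory Submission
  imports Defs "HOL-Probability.Distributions"
begin

lemma gauss_nn:
  fixes a :: real assumes "a > 0"
  shows "(\<integral>\<^sup>+t. ennreal (exp (- a * t^2 / 2)) \<partial>lborel) = ennreal (sqrt (2*pi/a))"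
proof -
  define \<sigma> where "\<sigma> = 1 / sqrt a"
  have sp: "\<sigma> > 0" using assms by (simp add: \<sigma>_def)
  have s2: "\<sigma>^2 = 1/a" using assms by (simp add: \<sigma>_def power_divide)
  have pos: "sqrt (2*pi/a) > 0" using assms by simp
  have eq: "exp (- a * t^2 / 2) = sqrt (2*pi/a) * normal_density 0 \<sigma> t" for t
  proof -
    have "normal_density 0 \<sigma> t = 1 / sqrt (2*pi/a) * exp (- a * t^2 / 2)"
      unfolding normal_density_def s2 using assms by (simp add: field_simps)
    then show ?thesis using pos assms by simp
  qed
  have "(\<integral>\<^sup>+t. ennreal (normal_density 0 \<sigma> t) \<partial>lborel) = ennreal 1"
    using sp by (subst nn_integral_eq_integral) auto
  moreover have "(\<integral>\<^sup>+t. ennreal (sqrt (2*pi/a) * normal_density 0 \<sigma> t) \<partial>lborel)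
     = ennreal (sqrt (2*pi/a)) * (\<integral>\<^sup>+t. ennreal (normal_density 0 \<sigma> t) \<partial>lborel)"
    using pos by (subst nn_integral_cmult[symmetric]) (auto simp: ennreal_mult)
  ultimately show ?thesis
    unfolding eq by simp
qed

lemma vec_prod_integral:
  fixes F :: "'n::finite \<Rightarrow> real \<Rightarrow> ennreal"
  assumes [measurable]: "\<And>i. F i \<in> borel_measurable borel"
  shows "(\<integral>\<^sup>+x. (\<Prod>i\<in>UNIV. F i (x$i)) \<partial>(lborel :: (real^'n) measure)) = (\<Prod>i\<in>UNIV. \<integral>\<^sup>+t. F i t \<partial>lborel)"
proof -
  define f where "f b = F (SOME i. axis i (1::real) = b)" for b :: "real^'n"
  have inj: "inj (\<lambda>i::'n. axis i (1::real))" by (auto simp: inj_def axis_eq_axis)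
  have B: "(Basis :: (real^'n) set) = range (\<lambda>i. axis i 1)"
    by (auto simp: Basis_vec_def)
  have fi: "f (axis i 1) = F i" for i
    unfolding f_def by (rule arg_cong[where f=F], rule some_equality) (auto simp: axis_eq_axis)
  have "(\<integral>\<^sup>+x. (\<Prod>b\<in>Basis. f b (x \<bullet> b)) \<partial>(lborel :: (real^'n) measure)) = (\<Prod>b\<in>Basis. (\<integral>\<^sup>+x. f b x \<partial>lborel))"
    by (rule nn_integral_lborel_prod) (auto simp: B fi)
  moreover have "\<And>x::real^'n. (\<Prod>b\<in>Basis. f b (x \<bullet> b)) = (\<Prod>i\<in>UNIV. F i (x$i))"
    unfolding B by (subst prod.reindex[OF inj]) (simp add: fi inner_axis)
  moreover have "(\<Prod>b\<in>(Basis::(real^'n) set). (\<integral>\<^sup>+x. f b x \<partial>lborel)) = (\<Prod>i\<in>UNIV. \<integral>\<^sup>+t. F i t \<partial>lborel)"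
    unfolding B by (subst prod.reindex[OF inj]) (simp add: fi)
  ultimately show ?thesis by simp
qed

lemma nn_upper:
  fixes f :: "real \<Rightarrow> real"
  assumes "l \<le> u" "\<And>t. t \<in> {l..u} \<Longrightarrow> f t \<le> M" "0 \<le> M"
  shows "(\<integral>\<^sup>+t. ennreal (f t) * indicator {l..u} t \<partial>lborel) \<le> ennreal ((u - l) * M)"
proof -
  have "(\<integral>\<^sup>+t. ennreal (f t) * indicator {l..u} t \<partial>lborel) \<le> (\<integral>\<^sup>+t. ennreal M * indicator {l..u} t \<partial>lborel)"
    by (intro nn_integral_mono) (auto split: split_indicator intro!: ennreal_leI assms(2))
  also have "\<dots> = ennreal M * ennreal (u - l)" using assms(1) by (simp add: nn_integral_cmult_indicator)
  also have "\<dots> = ennreal ((u - l) * M)" using assms by (simp add: ennreal_mult mult.commute)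
  finally show ?thesis .
qed

lemma nn_lower:
  fixes f :: "real \<Rightarrow> real"
  assumes "l \<le> u" "\<And>t. t \<in> {l..u} \<Longrightarrow> m \<le> f t" "0 \<le> m"
  shows "ennreal ((u - l) * m) \<le> (\<integral>\<^sup>+t. ennreal (f t) * indicator {l..u} t \<partial>lborel)"
proof -
  have "ennreal ((u - l) * m) = ennreal m * ennreal (u - l)" using assms by (simp add: ennreal_mult mult.commute)
  also have "\<dots> = (\<integral>\<^sup>+t. ennreal m * indicator {l..u} t \<partial>lborel)" using assms(1) by (simp add: nn_integral_cmult_indicator)
  also have "\<dots> \<le> (\<integral>\<^sup>+t. ennreal (f t) * indicator {l..u} t \<partial>lborel)"
    by (intro nn_integral_mono) (auto split: split_indicator intro!: ennreal_leI assms(2))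
  finally show ?thesis .
qed

lemma exp_tenth: "exp (1/10::real) \<le> 9/8"
proof -
  have a: "9/10 \<le> exp (-1/10::real)" using exp_ge_add_one_self[of "-1/10::real"] by simp
  have b: "exp (1/10::real) * exp (-1/10) = 1" by (simp add: exp_add[symmetric])
  have "exp (1/10::real) * (9/10) \<le> exp (1/10::real) * exp (-1/10)"
    using a by (intro mult_left_mono) auto
  with b show ?thesis by linarith
qed

lemma pt_bounds:
  fixes a b s t r w :: real
  assumes "0 \<le> a" "0 \<le> b" "\<bar>t - r\<bar> \<le> w"
  shows "exp (-(a*t^2 - b*cos(t/s))) \<le> exp (- a*r^2 + a*(w*(2*\<bar>r\<bar>+w)) + b)"
    and "exp (- a*r^2 - a*(w*(2*\<bar>r\<bar>+w)) - b) \<le> exp (-(a*t^2 - b*cos(t/s)))"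
proof -
  have w0: "0 \<le> w" using assms(3) by linarith
  have tr: "\<bar>t + r\<bar> \<le> 2*\<bar>r\<bar> + w" using assms(3) by arith
  have "\<bar>t^2 - r^2\<bar> = \<bar>t - r\<bar> * \<bar>t + r\<bar>"
    by (simp add: power2_eq_square abs_mult[symmetric] algebra_simps)
  also have "\<dots> \<le> w * (2*\<bar>r\<bar> + w)" using assms(3) w0 tr by (intro mult_mono) auto
  finally have d: "\<bar>t^2 - r^2\<bar> \<le> w*(2*\<bar>r\<bar>+w)" .
  have "\<bar>a*t^2 - a*r^2\<bar> = a * \<bar>t^2 - r^2\<bar>" using assms(1) by (simp add: abs_mult right_diff_distrib[symmetric])
  also have "\<dots> \<le> a*(w*(2*\<bar>r\<bar>+w))" by (rule mult_left_mono[OF d assms(1)])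
  finally have ad: "\<bar>a*t^2 - a*r^2\<bar> \<le> a*(w*(2*\<bar>r\<bar>+w))" .
  have "\<bar>b*cos(t/s)\<bar> = b * \<bar>cos (t/s)\<bar>" using assms(2) by (simp add: abs_mult)
  also have "\<dots> \<le> b" using assms(2) by (simp add: mult_left_le)
  finally have c: "\<bar>b*cos(t/s)\<bar> \<le> b" .
  show "exp (-(a*t^2 - b*cos(t/s))) \<le> exp (- a*r^2 + a*(w*(2*\<bar>r\<bar>+w)) + b)"
    using ad c by (subst exp_le_cancel_iff) (simp add: abs_le_iff)
  show "exp (- a*r^2 - a*(w*(2*\<bar>r\<bar>+w)) - b) \<le> exp (-(a*t^2 - b*cos(t/s)))"
    using ad c by (subst exp_le_cancel_iff) (simp add: abs_le_iff)
qed

lemma cell_bound: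
  fixes a b s r :: real
  assumes "0 \<le> a" "0 \<le> b" "0 < s"
    and E: "a*(pi * s*(2*\<bar>r\<bar>+pi * s)) + a*((9/20)*pi * s*(2*\<bar>r\<bar>+(9/20)*pi * s)) + 2*b \<le> 1/10"
  shows "(\<integral>\<^sup>+t. ennreal (exp (-(a*t^2 - b*cos(t/s)))) * indicator {r - pi * s..r + pi * s} t \<partial>lborel)
        \<le> ennreal (5/2) * (\<integral>\<^sup>+t. ennreal (exp (-(a*t^2 - b*cos(t/s)))) * indicator {r - (9/20)*pi * s..r + (9/20)*pi * s} t \<partial>lborel)"
    and "0 < (\<integral>\<^sup>+t. ennreal (exp (-(a*t^2 - b*cos(t/s)))) * indicator {r - (9/20)*pi * s..r + (9/20)*pi * s} t \<partial>lborel)"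
proof -
  define M where "M = exp (- a*r^2 + a*((pi * s)*(2*\<bar>r\<bar>+pi * s)) + b)"
  define m where "m = exp (- a*r^2 - a*(((9/20)*pi * s)*(2*\<bar>r\<bar>+(9/20)*pi * s)) - b)"
  have ps: "0 < pi * s" using assms(3) by simp
  have up: "(\<integral>\<^sup>+t. ennreal (exp (-(a*t^2 - b*cos(t/s)))) * indicator {r - pi * s..r + pi * s} t \<partial>lborel)
      \<le> ennreal ((r + pi * s - (r - pi * s)) * M)"
    unfolding M_def
  proof (rule nn_upper)
    fix t assume "t \<in> {r - pi * s..r + pi * s}"
    then have "\<bar>t - r\<bar> \<le> pi * s" by auto
    then show "exp (-(a*t^2 - b*cos(t/s))) \<le> exp (- a*r^2 + a*((pi * s)*(2*\<bar>r\<bar>+pi * s)) + b)"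
      by (rule pt_bounds(1)[OF assms(1,2)])
  qed (use ps in auto)
  have lo: "ennreal (((r + (9/20)*pi * s) - (r - (9/20)*pi * s)) * m) \<le>
      (\<integral>\<^sup>+t. ennreal (exp (-(a*t^2 - b*cos(t/s)))) * indicator {r - (9/20)*pi * s..r + (9/20)*pi * s} t \<partial>lborel)"
    unfolding m_def
  proof (rule nn_lower)
    fix t assume "t \<in> {r - (9/20)*pi * s..r + (9/20)*pi * s}"
    then have "\<bar>t - r\<bar> \<le> (9/20)*pi * s" unfolding atLeastAtMost_iff abs_le_iff by linarith
    then show "exp (- a*r^2 - a*(((9/20)*pi * s)*(2*\<bar>r\<bar>+(9/20)*pi * s)) - b) \<le> exp (-(a*t^2 - b*cos(t/s)))"
      by (rule pt_bounds(2)[OF assms(1,2)])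
  qed (use ps in auto)
  have Mm: "M = m * exp (a*(pi * s*(2*\<bar>r\<bar>+pi * s)) + a*((9/20)*pi * s*(2*\<bar>r\<bar>+(9/20)*pi * s)) + 2*b)"
    unfolding M_def m_def by (simp add: exp_add[symmetric] algebra_simps)
  have "exp (a*(pi * s*(2*\<bar>r\<bar>+pi * s)) + a*((9/20)*pi * s*(2*\<bar>r\<bar>+(9/20)*pi * s)) + 2*b) \<le> exp (1/10)"
    using E by simp
  also have "\<dots> \<le> 9/8" by (rule exp_tenth)
  finally have "M \<le> m * (9/8)" unfolding Mm by (intro mult_left_mono) (auto simp: m_def)
  then have k1: "(2*pi * s) * M \<le> (2*pi * s) * (m * (9/8))" using ps by (intro mult_left_mono) auto
  have e1: "r + pi * s - (r - pi * s) = 2*pi * s" by linarith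
  have e2: "5/2 * (((r + (9/20)*pi * s) - (r - (9/20)*pi * s)) * m) = (2*pi * s) * (m * (9/8))"
    by (simp add: algebra_simps)
  have key: "(r + pi * s - (r - pi * s)) * M \<le> 5/2 * (((r + (9/20)*pi * s) - (r - (9/20)*pi * s)) * m)"
    unfolding e1 e2 by (rule k1)
  have mpos: "0 < m" by (simp add: m_def)
  show "0 < (\<integral>\<^sup>+t. ennreal (exp (-(a*t^2 - b*cos(t/s)))) * indicator {r - (9/20)*pi * s..r + (9/20)*pi * s} t \<partial>lborel)"
  proof -
    have "0 < ((r + (9/20)*pi * s) - (r - (9/20)*pi * s)) * m" using mpos ps by simp
    then have "0 < ennreal (((r + (9/20)*pi * s) - (r - (9/20)*pi * s)) * m)" by simp
    then show ?thesis using lo by (rule order_less_le_trans)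
  qed
  have "ennreal ((r + pi * s - (r - pi * s)) * M) \<le> ennreal (5/2 * (((r + (9/20)*pi * s) - (r - (9/20)*pi * s)) * m))"
    using key by (rule ennreal_leI)
  also have "\<dots> = ennreal (5/2) * ennreal (((r + (9/20)*pi * s) - (r - (9/20)*pi * s)) * m)"
    by (rule ennreal_mult) (use ps mpos in auto)
  also have "\<dots> \<le> ennreal (5/2) * (\<integral>\<^sup>+t. ennreal (exp (-(a*t^2 - b*cos(t/s)))) * indicator {r - (9/20)*pi * s..r + (9/20)*pi * s} t \<partial>lborel)"
    using lo by (rule mult_left_mono) simp
  finally show "(\<integral>\<^sup>+t. ennreal (exp (-(a*t^2 - b*cos(t/s)))) * indicator {r - pi * s..r + pi * s} t \<partial>lborel)
        \<le> ennreal (5/2) * (\<integral>\<^sup>+t. ennreal (exp (-(a*t^2 - b*cos(t/s)))) * indicator {r - (9/20)*pi * s..r + (9/20)*pi * s} t \<partial>lborel)"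
    using up by (rule order_trans[rotated])
qed

lemma exp13: "8192 \<le> exp (13::real)"
proof -
  have "(2::real) \<le> exp 1" using exp_ge_add_one_self[of "1::real"] by simp
  then have "(2::real)^13 \<le> exp 1 ^ 13" by (rule power_mono) simp
  also have "exp (1::real) ^ 13 = exp (real 13 * 1)" by (rule exp_of_nat_mult[symmetric])
  finally show ?thesis by simp
qed

lemma e_ge: "101/40 \<le> exp (1::real)"
proof -
  have "- inverse (2^32) \<le> exp 1 - 5837465777 / (2147483648::real)"
    using e_approx_32 by (simp only: abs_le_iff) linarith
  moreover have "inverse (2^32::real) = 1/4294967296" by simp
  ultimately show ?thesis by linarith
qed

lemma coord_main:
  fixes \<kappa> h :: real
  assumes k3: "\<kappa> \<ge> 3" and h0: "0 < h" and hs: "h \<le> 1 / (10000 * pi^2 * \<kappa>)"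
  defines "S \<equiv> {t::real. \<exists>k::int. \<bar>k\<bar> \<le> K_h \<kappa> h \<and> - (9/20) * pi * sqrt h + 2 * pi * k * sqrt h \<le> t \<and> t \<le> (9/20) * pi * sqrt h + 2 * pi * k * sqrt h}"
  shows "(\<integral>\<^sup>+t. ennreal (exp (-(\<kappa>/3 * t^2 - \<kappa> * h/3 * cos (t / sqrt h)))) \<partial>lborel)
           \<le> ennreal (exp 1) * (\<integral>\<^sup>+t. ennreal (exp (-(\<kappa>/3 * t^2 - \<kappa> * h/3 * cos (t / sqrt h)))) * indicator S t \<partial>lborel)"
    and "(\<integral>\<^sup>+t. ennreal (exp (-(\<kappa>/3 * t^2 - \<kappa> * h/3 * cos (t / sqrt h)))) \<partial>lborel) < \<infinity>"
    and "0 < (\<integral>\<^sup>+t. ennreal (exp (-(\<kappa>/3 * t^2 - \<kappa> * h/3 * cos (t / sqrt h)))) * indicator S t \<partial>lborel)"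
proof -
  define a where "a = \<kappa>/3"
  define b where "b = \<kappa> * h/3"
  define s where "s = sqrt h"
  define q where "q = sqrt \<kappa>"
  define u where "u = q * s"
  define K where "K = K_h \<kappa> h"
  define \<phi> where "\<phi> t = exp (-(a * t^2 - b * cos (t / s)))" for t
  have phi: "\<And>t. exp (-(\<kappa>/3 * t^2 - \<kappa> * h/3 * cos (t / sqrt h))) = \<phi> t"
    by (simp add: \<phi>_def a_def b_def s_def)
  have s0: "s > 0" using h0 by (simp add: s_def)
  have q0: "q > 0" using k3 by (simp add: q_def)
  have qq: "q * q = \<kappa>" using k3 by (simp add: q_def)
  have ss: "s * s = h" using h0 by (simp add: s_def)
  have a0: "a > 0" using k3 by (simp add: a_def)
  have b0: "b \<ge> 0" using k3 h0 by (simp add: b_def)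
  have u0: "u > 0" using q0 s0 by (simp add: u_def)
  have "\<kappa> * h \<le> \<kappa> * (1 / (10000 * pi^2 * \<kappa>))" using hs k3 by (intro mult_left_mono) auto
  then have kh: "\<kappa> * h \<le> 1 / (10000 * pi^2)" using k3 by simp
  have uu: "u * u = \<kappa> * h" unfolding u_def using qq ss by (metis mult.assoc mult.left_commute)
  have kh0: "0 < \<kappa> * h" using k3 h0 by simp
  have pu2: "pi^2 * (\<kappa> * h) \<le> 1/10000" using kh by (simp add: field_simps)
  have pu: "pi * u \<le> 1/100"
  proof (rule power2_le_imp_le)
    have "(pi * u)^2 = pi^2 * (u * u)" by (simp add: power2_eq_square algebra_simps)
    moreover have "(1/100::real)^2 = 1/10000" by (simp add: power2_eq_square)
    ultimately show "(pi * u)^2 \<le> (1/100)^2" using pu2 uu by simp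
  qed simp
  have pi9: "9 \<le> pi^2" using mult_mono[of 3 pi 3 pi] pi_gt3 by (simp add: power2_eq_square)
  have kh2: "\<kappa> * h \<le> 1/90000"
  proof -
    have "9 * (\<kappa> * h) \<le> pi^2 * (\<kappa> * h)" using pi9 kh0 by (intro mult_right_mono) auto
    then show ?thesis using pu2 by linarith
  qed
  have sq: "sqrt (h * \<kappa>) = u" unfolding u_def q_def s_def by (simp add: real_sqrt_mult)
  have Kfl: "K = \<lfloor>5 / (pi * u)\<rfloor>" unfolding K_def K_h_def sq ..
  have K1: "real_of_int K \<le> 5 / (pi * u)" unfolding Kfl by simp
  have K2: "5 / (pi * u) - 1 < real_of_int K" unfolding Kfl by linarith
  have K0: "0 \<le> K" unfolding Kfl using u0 by simp
  have KU: "real_of_int K * (pi * u) \<le> 5"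
    using mult_right_mono[OF K1, of "pi * u"] u0 by simp
  have KU2: "5 - pi * u < real_of_int K * (pi * u)"
  proof -
    have "(5 / (pi * u) - 1) * (pi * u) < real_of_int K * (pi * u)"
      using K2 u0 by (intro mult_strict_right_mono) auto
    moreover have "(5 / (pi * u) - 1) * (pi * u) = 5 - pi * u" using u0 by (simp add: field_simps)
    ultimately show ?thesis by simp
  qed
  define T where "T = (2 * real_of_int K + 1) * pi * s"
  have qT: "q * T = 2 * (real_of_int K * (pi * u)) + pi * u"
    unfolding T_def u_def by (simp add: algebra_simps)
  have T9: "9 \<le> q * T" using qT KU2 pu by linarith
  have T0: "0 < T" unfolding T_def using K0 s0 by (intro mult_pos_pos) auto

  have E: "a * (pi * s * (2 * \<bar>2 * pi * real_of_int k * s\<bar> + pi * s))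
      + a * ((9/20) * pi * s * (2 * \<bar>2 * pi * real_of_int k * s\<bar> + (9/20) * pi * s)) + 2 * b \<le> 1/10"
    if "\<bar>k\<bar> \<le> K" for k
  proof -
    define R where "R = \<bar>2 * pi * real_of_int k * s\<bar>"
    have R0: "0 \<le> R" by (simp add: R_def)
    have "q * R = 2 * pi * \<bar>real_of_int k\<bar> * u"
      unfolding R_def u_def using q0 s0 by (simp add: abs_mult algebra_simps)
    also have "\<dots> \<le> 2 * pi * real_of_int K * u"
      using that u0 by (intro mult_right_mono mult_left_mono) auto
    also have "\<dots> \<le> 10" using KU by (simp add: algebra_simps)
    finally have qR: "q * R \<le> 10" .
    have P: "\<kappa> * s * R = u * (q * R)" unfolding u_def using qq by (simp add: algebra_simps)
    have P2: "pi * (\<kappa> * s * R) \<le> 1/10"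
    proof -
      have "pi * (\<kappa> * s * R) = (pi * u) * (q * R)" unfolding P by (simp add: algebra_simps)
      also have "\<dots> \<le> (1/100) * 10" using pu qR u0 q0 R0 by (intro mult_mono) auto
      finally show ?thesis by simp
    qed
    have expr: "a * (pi * s * (2 * R + pi * s)) + a * ((9/20) * pi * s * (2 * R + (9/20) * pi * s)) + 2 * b
        = (29/30) * (pi * (\<kappa> * s * R)) + (481/1200) * (pi^2 * (\<kappa> * (s * s))) + (2/3) * (\<kappa> * h)"
      unfolding a_def b_def by (simp add: algebra_simps power2_eq_square)
    show ?thesis unfolding R_def[symmetric] expr ss using P2 pu2 kh2 by linarith
  qed

  define cell where "cell k = {2 * pi * real_of_int k * s - pi * s .. 2 * pi * real_of_int k * s + pi * s}" for k :: int
  define Sk where "Sk k = {2 * pi * real_of_int k * s - (9/20) * pi * s .. 2 * pi * real_of_int k * s + (9/20) * pi * s}" for k :: int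
  have cellb: "(\<integral>\<^sup>+t. ennreal (\<phi> t) * indicator (cell k) t \<partial>lborel)
      \<le> ennreal (5/2) * (\<integral>\<^sup>+t. ennreal (\<phi> t) * indicator (Sk k) t \<partial>lborel)" if "\<bar>k\<bar> \<le> K" for k
    unfolding cell_def Sk_def \<phi>_def by (rule cell_bound(1)[OF less_imp_le[OF a0] b0 s0 E[OF that]])
  have Sk0: "0 < (\<integral>\<^sup>+t. ennreal (\<phi> t) * indicator (Sk 0) t \<partial>lborel)"
    using cell_bound(2)[OF less_imp_le[OF a0] b0 s0 E[of 0]] K0 unfolding Sk_def \<phi>_def by simp
  have S_eq: "S = (\<Union>k\<in>{-K..K}. Sk k)"
  proof (intro set_eqI iffI)
    fix x assume "x \<in> S"
    then obtain k :: int where k: "\<bar>k\<bar> \<le> K" "- (9/20) * pi * s + 2 * pi * k * s \<le> x" "x \<le> (9/20) * pi * s + 2 * pi * k * s"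
      unfolding S_def K_def s_def by blast
    then show "x \<in> (\<Union>k\<in>{-K..K}. Sk k)" unfolding Sk_def by (intro UN_I[of k]) (auto simp: abs_le_iff)
  next
    fix x assume "x \<in> (\<Union>k\<in>{-K..K}. Sk k)"
    then obtain k where k: "k \<in> {-K..K}" "x \<in> Sk k" by blast
    show "x \<in> S" unfolding S_def K_def[symmetric] s_def[symmetric]
      by (rule CollectI, rule exI[of _ k]) (use k in \<open>auto simp: abs_le_iff Sk_def\<close>)
  qed
  have S_closed: "closed S" unfolding S_eq Sk_def by (intro closed_UN) auto
  have [measurable]: "S \<in> sets borel" using S_closed by (rule borel_closed)
  have [measurable]: "\<phi> \<in> borel_measurable borel" unfolding \<phi>_def by measurable
  have [measurable]: "cell k \<in> sets borel" for k unfolding cell_def by simp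
  have [measurable]: "Sk k \<in> sets borel" for k unfolding Sk_def by simp
  define C where "C = {-T<..<T}"
  have [measurable]: "C \<in> sets borel" unfolding C_def by simp
  define A where "A = (\<integral>\<^sup>+t. ennreal (\<phi> t) * indicator S t \<partial>lborel)"
  define Core where "Core = (\<integral>\<^sup>+t. ennreal (\<phi> t) * indicator C t \<partial>lborel)"
  define Tail where "Tail = (\<integral>\<^sup>+t. ennreal (\<phi> t) * indicator (- C) t \<partial>lborel)"

  have pw1: "ennreal (\<phi> t) * indicator C t \<le> (\<Sum>k\<in>{-K..K}. ennreal (\<phi> t) * indicator (cell k) t)" for t
  proof (cases "t \<in> C")
    case False then show ?thesis by simp
  next
    case True
    then have tT: "-T < t" "t < T" by (auto simp: C_def)
    define y where "y = t / (2 * pi * s)"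
    have ty: "t = 2 * pi * s * y" unfolding y_def using s0 by simp
    have Ty: "T = 2 * pi * s * (real_of_int K + 1/2)" unfolding T_def by (simp add: algebra_simps)
    have ps: "0 < 2 * pi * s" using s0 by simp
    have "2 * pi * s * y < 2 * pi * s * (real_of_int K + 1/2)" using tT(2) unfolding ty Ty .
    then have y1: "y < real_of_int K + 1/2" using mult_less_cancel_left_pos[OF ps] by blast
    have "2 * pi * s * (-(real_of_int K + 1/2)) < 2 * pi * s * y" unfolding mult_minus_right using tT(1) unfolding ty Ty .
    then have y2: "-(real_of_int K + 1/2) < y" using mult_less_cancel_left_pos[OF ps] by blast
    define k0 where "k0 = \<lfloor>y + 1/2\<rfloor>"
    have k0a: "real_of_int k0 \<le> y + 1/2" "y + 1/2 < real_of_int k0 + 1" unfolding k0_def by linarith+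
    have k0K: "k0 \<in> {-K..K}"
    proof -
      have "real_of_int k0 < real_of_int K + 1" using k0a y1 by linarith
      moreover have "real_of_int (-K) < real_of_int k0 + 1" using k0a y2 by simp
      ultimately show ?thesis by simp
    qed
    have "\<bar>y - real_of_int k0\<bar> \<le> 1/2" using k0a by linarith
    then have "2 * pi * s * \<bar>y - real_of_int k0\<bar> \<le> 2 * pi * s * (1/2)" using ps by (intro mult_left_mono) auto
    moreover have "t - 2 * pi * real_of_int k0 * s = 2 * pi * s * (y - real_of_int k0)"
      unfolding ty by (simp add: algebra_simps)
    moreover have "\<bar>2 * pi * s * (y - real_of_int k0)\<bar> = 2 * pi * s * \<bar>y - real_of_int k0\<bar>"
      using s0 by (simp add: abs_mult)
    ultimately have "\<bar>t - 2 * pi * real_of_int k0 * s\<bar> \<le> pi * s" by simp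
    then have "t \<in> cell k0" unfolding cell_def by (auto simp: abs_le_iff)
    then have "ennreal (\<phi> t) * indicator C t = ennreal (\<phi> t) * indicator (cell k0) t" using True by simp
    also have "\<dots> \<le> (\<Sum>k\<in>{-K..K}. ennreal (\<phi> t) * indicator (cell k) t)"
      by (rule member_le_sum) (use k0K in auto)
    finally show ?thesis .
  qed
  have disj: "k = k1" if "t \<in> Sk k" "t \<in> Sk k1" for t k k1
  proof -
    have ps: "0 < pi * s" using s0 by simp
    have "(pi * s) * (2 * (real_of_int k - real_of_int k1)) \<le> (pi * s) * (9/10)"
         "(pi * s) * (2 * (real_of_int k1 - real_of_int k)) \<le> (pi * s) * (9/10)"
      using that unfolding Sk_def by (auto simp: algebra_simps)
    then have "2 * (real_of_int k - real_of_int k1) \<le> 9/10" "2 * (real_of_int k1 - real_of_int k) \<le> 9/10"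
      using mult_le_cancel_left_pos[OF ps] by blast+
    then have "real_of_int (k - k1) < 1" "real_of_int (k1 - k) < 1" by simp_all
    then show ?thesis by linarith
  qed
  have pw2: "(\<Sum>k\<in>{-K..K}. ennreal (\<phi> t) * indicator (Sk k) t) \<le> ennreal (\<phi> t) * indicator S t" for t
  proof (cases "\<exists>k0\<in>{-K..K}. t \<in> Sk k0")
    case False
    then have z: "(\<Sum>k\<in>{-K..K}. ennreal (\<phi> t) * indicator (Sk k) t) = 0" by (intro sum.neutral) auto
    show ?thesis unfolding z by (rule zero_le)
  next
    case True
    then obtain k0 where k0: "k0 \<in> {-K..K}" "t \<in> Sk k0" by blast
    have "t \<in> S" unfolding S_eq using k0 by blast
    have "(\<Sum>k\<in>{-K..K}. ennreal (\<phi> t) * indicator (Sk k) t) = (\<Sum>k\<in>{-K..K}. if k = k0 then ennreal (\<phi> t) else 0)"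
      using k0 disj by (intro sum.cong) (auto split: split_indicator)
    also have "\<dots> = ennreal (\<phi> t)" using k0 by simp
    finally show ?thesis using \<open>t \<in> S\<close> by simp
  qed
  have core_le: "Core \<le> ennreal (5/2) * A"
  proof -
    have "Core \<le> (\<integral>\<^sup>+t. (\<Sum>k\<in>{-K..K}. ennreal (\<phi> t) * indicator (cell k) t) \<partial>lborel)"
      unfolding Core_def by (intro nn_integral_mono pw1)
    also have "\<dots> = (\<Sum>k\<in>{-K..K}. (\<integral>\<^sup>+t. ennreal (\<phi> t) * indicator (cell k) t \<partial>lborel))"
      by (rule nn_integral_sum) auto
    also have "\<dots> \<le> (\<Sum>k\<in>{-K..K}. ennreal (5/2) * (\<integral>\<^sup>+t. ennreal (\<phi> t) * indicator (Sk k) t \<partial>lborel))"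
      by (intro sum_mono cellb) auto
    also have "\<dots> = ennreal (5/2) * (\<Sum>k\<in>{-K..K}. (\<integral>\<^sup>+t. ennreal (\<phi> t) * indicator (Sk k) t \<partial>lborel))"
      by (simp add: sum_distrib_left)
    also have "(\<Sum>k\<in>{-K..K}. (\<integral>\<^sup>+t. ennreal (\<phi> t) * indicator (Sk k) t \<partial>lborel))
        = (\<integral>\<^sup>+t. (\<Sum>k\<in>{-K..K}. ennreal (\<phi> t) * indicator (Sk k) t) \<partial>lborel)"
      by (rule nn_integral_sum[symmetric]) auto
    also have "\<dots> \<le> A" unfolding A_def by (intro nn_integral_mono pw2)
    finally show ?thesis by (simp add: mult_left_mono)
  qed
  show "0 < (\<integral>\<^sup>+t. ennreal (exp (-(\<kappa>/3 * t^2 - \<kappa> * h/3 * cos (t / sqrt h)))) * indicator S t \<partial>lborel)"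
  proof -
    have "(\<integral>\<^sup>+t. ennreal (\<phi> t) * indicator (Sk 0) t \<partial>lborel) \<le> A"
      unfolding A_def using K0 by (intro nn_integral_mono) (auto simp: S_eq split: split_indicator)
    then show ?thesis using Sk0 unfolding phi A_def by simp
  qed
  have qq2: "q^2 = \<kappa>" using qq by (simp add: power2_eq_square)
  have bcos: "- b \<le> b * cos (t / s)" for t
  proof -
    have "b * (-1) \<le> b * cos (t / s)" using b0 by (intro mult_left_mono) auto
    then show ?thesis by simp
  qed
  have bcos2: "b * cos (t / s) \<le> b" for t
  proof -
    have "b * cos (t / s) \<le> b * 1" using b0 by (intro mult_left_mono) auto
    then show ?thesis by simp
  qed
  have tail_pt: "ennreal (\<phi> t) * indicator (- C) t \<le> ennreal (exp (b - 27/2)) * ennreal (exp (- a * t^2 / 2))" for t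
  proof (cases "t \<in> C")
    case True then show ?thesis by simp
  next
    case False
    then have "T \<le> \<bar>t\<bar>" unfolding C_def by auto
    then have "q * T \<le> q * \<bar>t\<bar>" using q0 by (intro mult_left_mono) auto
    then have qt: "9 \<le> q * \<bar>t\<bar>" using T9 by linarith
    then have "9 * 9 \<le> (q * \<bar>t\<bar>) * (q * \<bar>t\<bar>)" by (intro mult_mono) auto
    moreover have "(q * \<bar>t\<bar>) * (q * \<bar>t\<bar>) = \<kappa> * t^2" using qq2 by (simp add: power2_eq_square algebra_simps)
    ultimately have "81 \<le> \<kappa> * t^2" by simp
    then have "27 \<le> a * t^2" unfolding a_def by simp
    then have "-(a * t^2 - b * cos (t / s)) \<le> (b - 27/2) + (- a * t^2 / 2)" using bcos2[of t] by simp
    then have "\<phi> t \<le> exp (b - 27/2) * exp (- a * t^2 / 2)" unfolding \<phi>_def exp_add[symmetric] by simp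
    then have "ennreal (\<phi> t) \<le> ennreal (exp (b - 27/2) * exp (- a * t^2 / 2))" by (rule ennreal_leI)
    then show ?thesis using False by (simp add: ennreal_mult)
  qed
  have tail_le: "Tail \<le> ennreal (exp (b - 27/2) * sqrt (2*pi/a))"
  proof -
    have "Tail \<le> (\<integral>\<^sup>+t. ennreal (exp (b - 27/2)) * ennreal (exp (- a * t^2 / 2)) \<partial>lborel)"
      unfolding Tail_def by (intro nn_integral_mono tail_pt)
    also have "\<dots> = ennreal (exp (b - 27/2)) * (\<integral>\<^sup>+t. ennreal (exp (- a * t^2 / 2)) \<partial>lborel)"
      by (rule nn_integral_cmult) simp
    also have "\<dots> = ennreal (exp (b - 27/2)) * ennreal (sqrt (2*pi/a))" using gauss_nn[OF a0] by simp
    also have "\<dots> = ennreal (exp (b - 27/2) * sqrt (2*pi/a))" using a0 by (simp add: ennreal_mult)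
    finally show ?thesis .
  qed
  have core_ge: "ennreal ((2/q) * exp (-1/3 - b)) \<le> Core"
  proof -
    have "1 < q * T" using T9 by linarith
    then have qT1: "1/q < T" using q0 by (simp add: field_simps)
    have "ennreal ((1/q - (-(1/q))) * exp (-1/3 - b)) \<le> (\<integral>\<^sup>+t. ennreal (\<phi> t) * indicator {-(1/q)..1/q} t \<partial>lborel)"
    proof (rule nn_lower)
      fix t assume "t \<in> {-(1/q)..1/q}"
      then have "\<bar>t\<bar> \<le> 1/q" by auto
      then have "q * \<bar>t\<bar> \<le> 1" using q0 by (simp add: field_simps)
      then have "(q * \<bar>t\<bar>) * (q * \<bar>t\<bar>) \<le> 1 * 1" using q0 by (intro mult_mono) auto
      moreover have "(q * \<bar>t\<bar>) * (q * \<bar>t\<bar>) = \<kappa> * t^2" using qq2 by (simp add: power2_eq_square algebra_simps)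
      ultimately have "\<kappa> * t^2 \<le> 1" by simp
      then have "a * t^2 \<le> 1/3" unfolding a_def by simp
      then have "-1/3 - b \<le> -(a * t^2 - b * cos (t / s))" using bcos[of t] by simp
      then show "exp (-1/3 - b) \<le> \<phi> t" unfolding \<phi>_def by simp
    qed (use q0 in auto)
    also have "\<dots> \<le> Core" unfolding Core_def using qT1
      by (intro nn_integral_mono) (auto simp: C_def split: split_indicator)
    finally show ?thesis by simp
  qed
  have ratio: "exp (b - 27/2) * sqrt (2*pi/a) \<le> (1/100) * ((2/q) * exp (-1/3 - b))"
  proof -
    define X where "X = exp (-1/3 - b)"
    define W where "W = exp (2*b + 1/3 - 27/2)"
    define V where "V = sqrt (6 * pi)"
    have X0: "0 < X" by (simp add: X_def)
    have eb: "exp (b - 27/2) = X * W" unfolding X_def W_def exp_add[symmetric] by simp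
    have sv: "sqrt (2*pi/a) = V / q"
    proof -
      have "2*pi/a = (6 * pi) / (q * q)" unfolding a_def qq by simp
      then show ?thesis unfolding V_def using q0 by (simp add: real_sqrt_divide real_sqrt_mult)
    qed
    have V5: "V \<le> 5"
    proof -
      have "6 * pi \<le> 25" using pi_less_4 by simp
      then have "V \<le> sqrt 25" unfolding V_def by (rule real_sqrt_le_mono)
      then show ?thesis by simp
    qed
    have V0: "0 \<le> V" by (simp add: V_def)
    have "2 * b \<le> 1/6" using kh2 unfolding b_def by simp
    then have "W \<le> exp (-13)" unfolding W_def by simp
    also have "exp (-13::real) = 1 / exp 13" by (simp add: exp_minus field_simps)
    also have "\<dots> \<le> 1 / 8192" using exp13 by (intro divide_left_mono) auto
    finally have W8: "W \<le> 1/8192" .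
    have W0: "0 \<le> W" by (simp add: W_def)
    have "X * W * V \<le> X * (1/8192) * 5" using X0 W0 V0 W8 V5 by (intro mult_mono) auto
    then have "(X * W * V) / q \<le> (X * (1/8192) * 5) / q" using q0 by (intro divide_right_mono) auto
    also have "\<dots> \<le> (1/100) * ((2/q) * X)" using X0 q0 by (simp add: field_simps)
    finally show ?thesis unfolding eb sv X_def[symmetric] by (simp add: algebra_simps)
  qed
  have N_eq: "(\<integral>\<^sup>+t. ennreal (\<phi> t) \<partial>lborel) = Core + Tail"
  proof -
    have "(\<integral>\<^sup>+t. ennreal (\<phi> t) \<partial>lborel) = (\<integral>\<^sup>+t. ennreal (\<phi> t) * indicator C t + ennreal (\<phi> t) * indicator (- C) t \<partial>lborel)"
      by (intro nn_integral_cong) (auto split: split_indicator)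
    also have "\<dots> = Core + Tail" unfolding Core_def Tail_def by (rule nn_integral_add) auto
    finally show ?thesis .
  qed
  have "Tail \<le> ennreal ((1/100) * ((2/q) * exp (-1/3 - b)))" using tail_le ratio
    by (meson ennreal_leI order_trans)
  also have "\<dots> = ennreal (1/100) * ennreal ((2/q) * exp (-1/3 - b))" by (rule ennreal_mult) (use q0 in auto)
  also have "\<dots> \<le> ennreal (1/100) * Core" using core_ge by (rule mult_left_mono) simp
  finally have tc: "Tail \<le> ennreal (1/100) * Core" .
  have "(\<integral>\<^sup>+t. ennreal (\<phi> t) \<partial>lborel) \<le> Core + ennreal (1/100) * Core" unfolding N_eq using tc by (rule add_left_mono)
  also have "\<dots> = ennreal (101/100) * Core"
  proof -
    have "ennreal (101/100) = 1 + ennreal (1/100)" using ennreal_plus[of 1 "1/100"] by simp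
    then show ?thesis by (simp add: distrib_right)
  qed
  also have "\<dots> \<le> ennreal (101/100) * (ennreal (5/2) * A)" using core_le by (rule mult_left_mono) simp
  also have "\<dots> = ennreal (101/40) * A" by (simp add: ennreal_mult[symmetric] mult.assoc[symmetric])
  also have "\<dots> \<le> ennreal (exp 1) * A" using e_ge by (intro mult_right_mono ennreal_leI) auto
  finally show "(\<integral>\<^sup>+t. ennreal (exp (-(\<kappa>/3 * t^2 - \<kappa> * h/3 * cos (t / sqrt h)))) \<partial>lborel)
           \<le> ennreal (exp 1) * (\<integral>\<^sup>+t. ennreal (exp (-(\<kappa>/3 * t^2 - \<kappa> * h/3 * cos (t / sqrt h)))) * indicator S t \<partial>lborel)"
    unfolding phi A_def .
  have fin_pt: "ennreal (\<phi> t) \<le> ennreal (exp b) * ennreal (exp (- (2*a) * t^2 / 2))" for t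
  proof -
    have "-(a * t^2 - b * cos (t / s)) \<le> b + (- (2*a) * t^2 / 2)"
    proof -
      have "b * cos (t / s) \<le> b * 1" using b0 by (intro mult_left_mono) auto
      then show ?thesis by simp
    qed
    then have "\<phi> t \<le> exp b * exp (- (2*a) * t^2 / 2)" unfolding \<phi>_def exp_add[symmetric] by simp
    then show ?thesis by (simp add: ennreal_mult[symmetric] ennreal_leI)
  qed
  have "(\<integral>\<^sup>+t. ennreal (\<phi> t) \<partial>lborel) \<le> (\<integral>\<^sup>+t. ennreal (exp b) * ennreal (exp (- (2*a) * t^2 / 2)) \<partial>lborel)"
    by (intro nn_integral_mono fin_pt)
  also have "\<dots> = ennreal (exp b) * (\<integral>\<^sup>+t. ennreal (exp (- (2*a) * t^2 / 2)) \<partial>lborel)"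
    by (rule nn_integral_cmult) simp
  also have "\<dots> = ennreal (exp b) * ennreal (sqrt (2*pi/(2*a)))" using gauss_nn[of "2*a"] a0 by simp
  also have "\<dots> < \<infinity>" by (simp add: ennreal_mult_less_top)
  finally show "(\<integral>\<^sup>+t. ennreal (exp (-(\<kappa>/3 * t^2 - \<kappa> * h/3 * cos (t / sqrt h)))) \<partial>lborel) < \<infinity>"
    unfolding phi .
qed


lemma coord_one:
  shows "(\<integral>\<^sup>+t. ennreal (exp (-(t^2/2))) \<partial>lborel) \<le> ennreal (exp 1) * (\<integral>\<^sup>+t. ennreal (exp (-(t^2/2))) * indicator {t::real. \<bar>t\<bar> \<le> 2} t \<partial>lborel)"
    and "(\<integral>\<^sup>+t. ennreal (exp (-(t^2/2))) \<partial>lborel) < \<infinity>"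
    and "0 < (\<integral>\<^sup>+t. ennreal (exp (-(t^2/2))) * indicator {t::real. \<bar>t\<bar> \<le> 2} t \<partial>lborel)"
proof -
  have eq: "\<And>t::real. exp (-(t^2/2)) = exp (- 1 * t^2 / 2)" by simp
  have N: "(\<integral>\<^sup>+t. ennreal (exp (-(t^2/2))) \<partial>lborel) = ennreal (sqrt (2*pi))"
    unfolding eq using gauss_nn[of 1] by simp
  have "ennreal ((1 - (-1)) * exp (-1/2)) \<le> (\<integral>\<^sup>+t. ennreal (exp (-(t^2/2))) * indicator {-1..1} t \<partial>lborel)"
  proof (rule nn_lower)
    fix t :: real assume "t \<in> {-1..1}"
    then have "\<bar>t\<bar> \<le> 1" by auto
    then have "\<bar>t\<bar> * \<bar>t\<bar> \<le> 1 * 1" by (intro mult_mono) auto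
    then have "t^2 \<le> 1" by (simp add: power2_eq_square)
    then show "exp (-1/2) \<le> exp (-(t^2/2))" by simp
  qed auto
  also have "\<dots> \<le> (\<integral>\<^sup>+t. ennreal (exp (-(t^2/2))) * indicator {t::real. \<bar>t\<bar> \<le> 2} t \<partial>lborel)"
    by (intro nn_integral_mono) (auto split: split_indicator)
  finally have A: "ennreal (2 * exp (-1/2)) \<le> (\<integral>\<^sup>+t. ennreal (exp (-(t^2/2))) * indicator {t::real. \<bar>t\<bar> \<le> 2} t \<partial>lborel)"
    by simp
  show "0 < (\<integral>\<^sup>+t. ennreal (exp (-(t^2/2))) * indicator {t::real. \<bar>t\<bar> \<le> 2} t \<partial>lborel)"
    using A by (rule order_less_le_trans[rotated]) simp
  show "(\<integral>\<^sup>+t. ennreal (exp (-(t^2/2))) \<partial>lborel) < \<infinity>" unfolding N by simp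
  have "3/2 \<le> exp (1/2::real)" using exp_ge_add_one_self[of "1/2::real"] by simp
  moreover have "sqrt (2*pi) \<le> 3"
  proof -
    have "2 * pi \<le> 9" using pi_less_4 by simp
    then have "sqrt (2*pi) \<le> sqrt 9" by (rule real_sqrt_le_mono)
    then show ?thesis by simp
  qed
  moreover have "exp 1 * (2 * exp (-1/2)) = 2 * exp (1/2::real)"
    by (simp add: exp_add[symmetric] mult.left_commute)
  ultimately have r: "sqrt (2*pi) \<le> exp 1 * (2 * exp (-1/2))" by simp
  have "(\<integral>\<^sup>+t. ennreal (exp (-(t^2/2))) \<partial>lborel) \<le> ennreal (exp 1 * (2 * exp (-1/2)))"
    unfolding N using r by (rule ennreal_leI)
  also have "\<dots> = ennreal (exp 1) * ennreal (2 * exp (-1/2))" by (rule ennreal_mult) auto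
  also have "\<dots> \<le> ennreal (exp 1) * (\<integral>\<^sup>+t. ennreal (exp (-(t^2/2))) * indicator {t::real. \<bar>t\<bar> \<le> 2} t \<partial>lborel)"
    using A by (rule mult_left_mono) simp
  finally show "(\<integral>\<^sup>+t. ennreal (exp (-(t^2/2))) \<partial>lborel) \<le> ennreal (exp 1) * (\<integral>\<^sup>+t. ennreal (exp (-(t^2/2))) * indicator {t::real. \<bar>t\<bar> \<le> 2} t \<partial>lborel)" .
qed

lemma closed_Sset:
  fixes L U :: "int \<Rightarrow> real"
  shows "closed {t::real. \<exists>k::int. \<bar>k\<bar> \<le> K \<and> L k \<le> t \<and> t \<le> U k}"
proof -
  have "{t::real. \<exists>k::int. \<bar>k\<bar> \<le> K \<and> L k \<le> t \<and> t \<le> U k} = (\<Union>k\<in>{-K..K}. {L k..U k})"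
  proof (intro set_eqI iffI)
    fix x assume "x \<in> {t::real. \<exists>k::int. \<bar>k\<bar> \<le> K \<and> L k \<le> t \<and> t \<le> U k}"
    then obtain k where "\<bar>k\<bar> \<le> K" "L k \<le> x" "x \<le> U k" by blast
    then show "x \<in> (\<Union>k\<in>{-K..K}. {L k..U k})" by (intro UN_I[of k]) (auto simp: abs_le_iff)
  next
    fix x assume "x \<in> (\<Union>k\<in>{-K..K}. {L k..U k})"
    then obtain k where "k \<in> {-K..K}" "L k \<le> x" "x \<le> U k" by auto
    then show "x \<in> {t::real. \<exists>k::int. \<bar>k\<bar> \<le> K \<and> L k \<le> t \<and> t \<le> U k}"
      by (intro CollectI exI[of _ k]) (auto simp: abs_le_iff)
  qed
  then show ?thesis by (simp add: closed_UN)
qed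

lemma grad_coord:
  fixes \<kappa> h t :: real and k :: int
  assumes k3: "\<kappa> \<ge> 3" and h0: "0 < h" and hs: "h \<le> 1 / (10000 * pi^2 * \<kappa>)"
    and kK: "\<bar>k\<bar> \<le> K_h \<kappa> h"
    and t1: "- (9/20) * pi * sqrt h + 2 * pi * k * sqrt h \<le> t"
    and t2: "t \<le> (9/20) * pi * sqrt h + 2 * pi * k * sqrt h"
  shows "\<bar>\<kappa>/3 * (2 * t) + \<kappa> * h/3 * (sin (t / sqrt h) / sqrt h)\<bar> \<le> 7 * sqrt \<kappa>"
proof -
  define s where "s = sqrt h"
  define q where "q = sqrt \<kappa>"
  define u where "u = q * s"
  define K where "K = K_h \<kappa> h"
  have s0: "s > 0" using h0 by (simp add: s_def)
  have q0: "q > 0" using k3 by (simp add: q_def)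
  have qq: "q * q = \<kappa>" using k3 by (simp add: q_def)
  have ss: "s * s = h" using h0 by (simp add: s_def)
  have u0: "u > 0" using q0 s0 by (simp add: u_def)
  have "\<kappa> * h \<le> \<kappa> * (1 / (10000 * pi^2 * \<kappa>))" using hs k3 by (intro mult_left_mono) auto
  then have kh: "\<kappa> * h \<le> 1 / (10000 * pi^2)" using k3 by simp
  have uu: "u * u = \<kappa> * h" unfolding u_def using qq ss by (metis mult.assoc mult.left_commute)
  have pu2: "pi^2 * (\<kappa> * h) \<le> 1/10000" using kh by (simp add: field_simps)
  have pu: "pi * u \<le> 1/100"
  proof (rule power2_le_imp_le)
    have "(pi * u)^2 = pi^2 * (u * u)" by (simp add: power2_eq_square algebra_simps)
    moreover have "(1/100::real)^2 = 1/10000" by (simp add: power2_eq_square)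
    ultimately show "(pi * u)^2 \<le> (1/100)^2" using pu2 uu by simp
  qed simp
  have u300: "u \<le> 1/300"
  proof -
    have "3 * u \<le> pi * u" using pi_gt3 u0 by (intro mult_right_mono) auto
    then show ?thesis using pu by linarith
  qed
  have sq: "sqrt (h * \<kappa>) = u" unfolding u_def q_def s_def by (simp add: real_sqrt_mult)
  have Kfl: "K = \<lfloor>5 / (pi * u)\<rfloor>" unfolding K_def K_h_def sq ..
  have K1: "real_of_int K \<le> 5 / (pi * u)" unfolding Kfl by simp
  have KU: "real_of_int K * (pi * u) \<le> 5"
    using mult_right_mono[OF K1, of "pi * u"] u0 by simp
  have "\<bar>t - 2 * pi * k * s\<bar> \<le> (9/20) * pi * s" using t1 t2 unfolding s_def abs_le_iff by linarith
  moreover have "\<bar>2 * pi * k * s\<bar> = 2 * pi * \<bar>real_of_int k\<bar> * s" using s0 by (simp add: abs_mult)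
  ultimately have ta: "\<bar>t\<bar> \<le> (9/20) * pi * s + 2 * pi * \<bar>real_of_int k\<bar> * s" by linarith
  have "q * \<bar>t\<bar> \<le> q * ((9/20) * pi * s + 2 * pi * \<bar>real_of_int k\<bar> * s)"
    using ta q0 by (intro mult_left_mono) auto
  also have "\<dots> = (9/20) * (pi * u) + 2 * \<bar>real_of_int k\<bar> * (pi * u)" unfolding u_def by (simp add: algebra_simps)
  also have "\<dots> \<le> (9/20) * (1/100) + 2 * real_of_int K * (pi * u)"
    using pu kK u0 unfolding K_def by (intro add_mono mult_left_mono mult_right_mono) auto
  also have "\<dots> \<le> (9/20) * (1/100) + 10" using KU by (simp add: mult.commute mult.left_commute)
  finally have qt: "q * \<bar>t\<bar> \<le> 9/2000 + 10" by simp
  have T1: "\<bar>\<kappa>/3 * (2 * t)\<bar> = (2/3) * q * (q * \<bar>t\<bar>)"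
    using k3 qq by (simp add: abs_mult algebra_simps)
  have "\<bar>\<kappa> * h/3 * (sin (t / sqrt h) / sqrt h)\<bar> = (\<kappa> * h/3 / s) * \<bar>sin (t / s)\<bar>"
    using k3 h0 s0 unfolding s_def by (simp add: abs_mult)
  also have "\<dots> \<le> (\<kappa> * h/3 / s) * 1" using k3 h0 s0 by (intro mult_left_mono) auto
  also have "\<kappa> * h/3 / s = q * u / 3" unfolding u_def using s0 qq ss[symmetric] by (simp add: field_simps)
  finally have T2: "\<bar>\<kappa> * h/3 * (sin (t / sqrt h) / sqrt h)\<bar> \<le> q * u / 3" by simp
  have "(2/3) * q * (q * \<bar>t\<bar>) \<le> (2/3) * q * (9/2000 + 10)" using qt q0 by (intro mult_left_mono) auto
  moreover have "q * u / 3 \<le> q * (1/300) / 3" using u300 q0 by (intro divide_right_mono mult_left_mono) auto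
  ultimately have "\<bar>\<kappa>/3 * (2 * t)\<bar> + \<bar>\<kappa> * h/3 * (sin (t / sqrt h) / sqrt h)\<bar> \<le> 7 * q"
  proof -
    have "(2/3) * q * (9/2000 + 10) = (20009/3000) * q" by simp
    moreover have "q * (1/300) / 3 = q / 900" by simp
    ultimately show ?thesis using T1 T2 q0 \<open>(2/3) * q * (q * \<bar>t\<bar>) \<le> (2/3) * q * (9/2000 + 10)\<close>
      \<open>q * u / 3 \<le> q * (1/300) / 3\<close> by linarith
  qed
  then have "\<bar>\<kappa>/3 * (2 * t)\<bar> + \<bar>\<kappa> * h/3 * (sin (t / sqrt h) / sqrt h)\<bar> \<le> 7 * sqrt \<kappa>" unfolding q_def .
  then show ?thesis using abs_triangle_ineq[of "\<kappa>/3 * (2 * t)" "\<kappa> * h/3 * (sin (t / sqrt h) / sqrt h)"] by linarith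
qed


theorem lemma9:
  fixes \<kappa> h :: real and i1 :: "'n::finite"
  assumes "\<kappa> \<ge> 3" and "0 < h" and "h \<le> 1 / (10000 * pi^2 * \<kappa>)"
  shows "measure (pi_star \<kappa> h i1) (Omega_hard \<kappa> h i1) \<ge> exp (- real CARD('n))
    \<and> (\<forall>x\<in>Omega_hard \<kappa> h i1. \<exists>D. GDERIV (f_hard \<kappa> h i1) x :> D
          \<and> norm D \<le> 10 * sqrt (\<kappa> * real CARD('n)))"
proof -
  note k3 = assms(1) and h0 = assms(2) and hs = assms(3)
  define Sg where "Sg = {t::real. \<exists>k::int. \<bar>k\<bar> \<le> K_h \<kappa> h \<and> - (9/20) * pi * sqrt h + 2 * pi * k * sqrt h \<le> t \<and> t \<le> (9/20) * pi * sqrt h + 2 * pi * k * sqrt h}"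
  define g where "g i t = (if i = i1 then t^2/2 else \<kappa>/3 * t^2 - \<kappa> * h/3 * cos (t / sqrt h))" for i t
  define S where "S i = (if i = i1 then {t::real. \<bar>t\<bar> \<le> 2} else Sg)" for i
  define g' where "g' i t = (if i = i1 then t else \<kappa>/3 * (2 * t) + \<kappa> * h/3 * (sin (t / sqrt h) / sqrt h))" for i t
  define \<Omega> where "\<Omega> = Omega_hard \<kappa> h i1"
  have f_eq: "f_hard \<kappa> h i1 = (\<lambda>x. \<Sum>i\<in>UNIV. g i (x$i))"
    by (simp add: fun_eq_iff f_hard_def g_def)
  have Om: "\<Omega> = {x. \<forall>i. x$i \<in> S i}"
    unfolding \<Omega>_def Omega_hard_def S_def Sg_def by (auto split: if_splits)
  have sh0: "sqrt h > 0" using h0 by simp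
  have dg: "((\<lambda>t. g i t) has_real_derivative g' i t) (at t)" for i t
  proof (cases "i = i1")
    case True
    show ?thesis unfolding g_def g'_def using True
      by (auto intro!: derivative_eq_intros simp: power2_eq_square)
  next
    case False
    show ?thesis unfolding g_def g'_def using False sh0
      by (auto intro!: derivative_eq_intros simp: power2_eq_square field_simps)
  qed
  have dgx: "((\<lambda>x. g i (x$i)) has_derivative (\<lambda>v. g' i (x$i) * v$i)) (at x)" for i and x :: "real^'n"
  proof -
    have "((\<lambda>x::real^'n. x$i) has_derivative (\<lambda>x. x$i)) (at x)"
      by (rule bounded_linear_imp_has_derivative[OF bounded_linear_vec_nth])
    moreover have "(g i has_derivative (\<lambda>y. g' i (x$i) * y)) (at ((\<lambda>x::real^'n. x$i) x))"
      using has_field_derivative_imp_has_derivative[OF dg[of i "x$i"]] by simp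
    ultimately show ?thesis by (rule has_derivative_compose)
  qed
  have fd: "(f_hard \<kappa> h i1 has_derivative (\<lambda>v. v \<bullet> (\<chi> i. g' i (x$i)))) (at x)" for x :: "real^'n"
    unfolding f_eq
    by (rule has_derivative_eq_rhs, rule has_derivative_sum, rule dgx)
       (simp add: inner_vec_def fun_eq_iff mult.commute)
  have grad: "\<exists>D. GDERIV (f_hard \<kappa> h i1) x :> D \<and> norm D \<le> 10 * sqrt (\<kappa> * real CARD('n))"
    if "x \<in> \<Omega>" for x
  proof (intro exI conjI)
    show "GDERIV (f_hard \<kappa> h i1) x :> (\<chi> i. g' i (x$i))" unfolding gderiv_def by (rule fd)
    have b7: "\<bar>g' i (x$i)\<bar> \<le> 7 * sqrt \<kappa>" for i
    proof (cases "i = i1")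
      case True
      have "1 \<le> sqrt \<kappa>" using k3 by simp
      moreover have "x$i \<in> S i" using that by (simp add: Om)
      then have "\<bar>x$i\<bar> \<le> 2" using True by (simp add: S_def)
      moreover have "g' i (x$i) = x$i" using True by (simp add: g'_def)
      ultimately show ?thesis by linarith
    next
      case False
      have "x$i \<in> S i" using that by (simp add: Om)
      then have "x$i \<in> Sg" using False by (simp add: S_def)
      then obtain k :: int where "\<bar>k\<bar> \<le> K_h \<kappa> h" "- (9/20) * pi * sqrt h + 2 * pi * k * sqrt h \<le> x$i"
        "x$i \<le> (9/20) * pi * sqrt h + 2 * pi * k * sqrt h" unfolding Sg_def by blast
      from grad_coord[OF k3 h0 hs this] show ?thesis using False by (simp add: g'_def)
    qed
    have ssum: "(\<Sum>i\<in>(UNIV::'n set). \<bar>g' i (x$i)\<bar>^2) \<le> (\<Sum>i\<in>(UNIV::'n set). (7 * sqrt \<kappa>)^2)"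
    proof (rule sum_mono)
      fix i :: 'n assume "i \<in> UNIV"
      show "\<bar>g' i (x$i)\<bar>^2 \<le> (7 * sqrt \<kappa>)^2" by (rule power_mono[OF b7]) simp
    qed
    have "norm (\<chi> i. g' i (x$i)) = sqrt (\<Sum>i\<in>(UNIV::'n set). \<bar>g' i (x$i)\<bar>^2)" by (simp add: norm_vec_def L2_set_def)
    also have "\<dots> \<le> sqrt (\<Sum>i\<in>(UNIV::'n set). (7 * sqrt \<kappa>)^2)" using ssum by (rule real_sqrt_le_mono)
    also have "\<dots> = sqrt (real CARD('n) * (49 * \<kappa>))"
      using k3 by (simp add: power_mult_distrib)
    also have "\<dots> = 7 * sqrt (\<kappa> * real CARD('n))"
      by (simp add: real_sqrt_mult mult.commute)
    also have "\<dots> \<le> 10 * sqrt (\<kappa> * real CARD('n))" using k3 by simp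
    finally show "norm (\<chi> i. g' i (x$i)) \<le> 10 * sqrt (\<kappa> * real CARD('n))" .
  qed
  have gcont: "continuous_on UNIV (g i)" for i
    by (intro continuous_at_imp_continuous_on ballI DERIV_isCont[OF dg])
  have gm[measurable]: "g i \<in> borel_measurable borel" for i
    by (rule borel_measurable_continuous_onI[OF gcont])
  have S_closed: "closed (S i)" for i
  proof (cases "i = i1")
    case True
    have "{t::real. \<bar>t\<bar> \<le> 2} = {-2..2}" by auto
    then show ?thesis using True by (simp add: S_def)
  next
    case False
    then show ?thesis unfolding S_def Sg_def by (simp add: closed_Sset)
  qed
  have Sm[measurable]: "S i \<in> sets borel" for i using S_closed by (rule borel_closed)
  have Om_closed: "closed \<Omega>"
  proof -
    have "\<Omega> = (\<Inter>i. (\<lambda>x. x$i) -` S i)" unfolding Om by auto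
    then show ?thesis by (simp add: closed_INT closed_vimage_vec_nth S_closed)
  qed
  have Omb[measurable]: "\<Omega> \<in> sets borel" using Om_closed by (rule borel_closed)
  have Omm: "\<Omega> \<in> sets lborel" using Omb by simp
  have fcont: "continuous_on UNIV (f_hard \<kappa> h i1)"
    by (intro continuous_at_imp_continuous_on ballI has_derivative_continuous[OF fd])
  have fm[measurable]: "f_hard \<kappa> h i1 \<in> borel_measurable borel"
    by (rule borel_measurable_continuous_onI[OF fcont])
  define NL where "NL i = (\<integral>\<^sup>+t. ennreal (exp (- g i t)) \<partial>lborel)" for i
  define AL where "AL i = (\<integral>\<^sup>+t. ennreal (exp (- g i t)) * indicator (S i) t \<partial>lborel)" for i
  have cb: "NL i \<le> ennreal (exp 1) * AL i \<and> NL i < \<infinity> \<and> 0 < AL i" for i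
  proof (cases "i = i1")
    case True
    then show ?thesis unfolding NL_def AL_def g_def S_def using coord_one by simp
  next
    case False
    then show ?thesis unfolding NL_def AL_def g_def S_def Sg_def using coord_main[OF k3 h0 hs] by simp
  qed
  have AN: "AL i \<le> NL i" for i
    unfolding AL_def NL_def by (intro nn_integral_mono) (auto split: split_indicator)
  have pt1: "ennreal (exp (- f_hard \<kappa> h i1 x)) = (\<Prod>i\<in>UNIV. ennreal (exp (- g i (x$i))))" for x
  proof -
    have "exp (- f_hard \<kappa> h i1 x) = (\<Prod>i\<in>UNIV. exp (- g i (x$i)))"
      unfolding f_eq by (simp add: exp_sum sum_negf[symmetric])
    then show ?thesis by (simp add: prod_ennreal)
  qed
  have pt2: "ennreal (exp (- f_hard \<kappa> h i1 x)) * indicator \<Omega> x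
      = (\<Prod>i\<in>UNIV. ennreal (exp (- g i (x$i))) * indicator (S i) (x$i))" for x
  proof -
    have "indicator \<Omega> x = (\<Prod>i\<in>UNIV. indicator (S i) (x$i) :: ennreal)"
    proof (cases "x \<in> \<Omega>")
      case True
      then show ?thesis by (simp add: Om)
    next
      case False
      then obtain j where "x$j \<notin> S j" unfolding Om by auto
      then have "(\<Prod>i\<in>UNIV. indicator (S i) (x$i) :: ennreal) = 0"
        by (intro prod_zero bexI[of _ j]) auto
      then show ?thesis using False by simp
    qed
    then show ?thesis unfolding pt1 by (simp add: prod.distrib)
  qed
  have I_eq: "(\<integral>\<^sup>+x. ennreal (exp (- f_hard \<kappa> h i1 x)) \<partial>(lborel :: (real^'n) measure)) = (\<Prod>i\<in>UNIV. NL i)"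
    unfolding pt1 NL_def by (rule vec_prod_integral) simp
  have J_eq: "(\<integral>\<^sup>+x. ennreal (exp (- f_hard \<kappa> h i1 x)) * indicator \<Omega> x \<partial>(lborel :: (real^'n) measure)) = (\<Prod>i\<in>UNIV. AL i)"
    unfolding pt2 AL_def by (rule vec_prod_integral) simp
  have NL0: "0 < NL i" for i using cb[of i] AN[of i] by (meson order_less_le_trans)
  have Ifin: "(\<Prod>i\<in>UNIV. NL i) < \<infinity>"
    using cb by (simp add: less_top[symmetric] ennreal_prod_eq_top)
  have Ipos: "(\<Prod>i\<in>UNIV. NL i) \<noteq> 0"
  proof -
    have "NL i \<noteq> 0" for i using NL0[of i] by auto
    then show ?thesis by simp
  qed
  define Z where "Z = (\<integral>y. exp (- f_hard \<kappa> h i1 y) \<partial>(lborel :: (real^'n) measure))"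
  have intg: "integrable lborel (\<lambda>y::real^'n. exp (- f_hard \<kappa> h i1 y))"
    by (rule integrableI_nonneg) (use I_eq Ifin in auto)
  have IZ: "(\<Prod>i\<in>UNIV. NL i) = ennreal Z"
    unfolding Z_def I_eq[symmetric] by (rule nn_integral_eq_integral[OF intg]) simp
  have Z0: "0 < Z" using IZ Ipos by (metis ennreal_eq_0_iff not_less)
  have emeq: "emeasure (pi_star \<kappa> h i1) \<Omega> = ennreal (1/Z) * (\<Prod>i\<in>UNIV. AL i)"
  proof -
    have "emeasure (pi_star \<kappa> h i1) \<Omega>
        = (\<integral>\<^sup>+x. ennreal (exp (- f_hard \<kappa> h i1 x) / Z) * indicator \<Omega> x \<partial>lborel)"
      unfolding pi_star_def Z_def[symmetric] by (rule emeasure_density) (auto simp: Omm)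
    also have "\<dots> = (\<integral>\<^sup>+x. ennreal (1/Z) * (ennreal (exp (- f_hard \<kappa> h i1 x)) * indicator \<Omega> x) \<partial>lborel)"
    proof (intro nn_integral_cong)
      fix x :: "real^'n"
      have "ennreal (exp (- f_hard \<kappa> h i1 x) / Z) = ennreal (1/Z) * ennreal (exp (- f_hard \<kappa> h i1 x))"
        using Z0 by (subst ennreal_mult[symmetric]) auto
      then show "ennreal (exp (- f_hard \<kappa> h i1 x) / Z) * indicator \<Omega> x
          = ennreal (1/Z) * (ennreal (exp (- f_hard \<kappa> h i1 x)) * indicator \<Omega> x)"
        by (simp only: mult.assoc)
    qed
    also have "\<dots> = ennreal (1/Z) * (\<integral>\<^sup>+x. ennreal (exp (- f_hard \<kappa> h i1 x)) * indicator \<Omega> x \<partial>lborel)"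
      by (rule nn_integral_cmult) (use Omb in simp)
    finally show ?thesis unfolding J_eq .
  qed
  have low: "ennreal (exp (- real CARD('n))) \<le> emeasure (pi_star \<kappa> h i1) \<Omega>"
  proof -
    have "(\<Prod>i\<in>UNIV. ennreal (exp (-1)) * NL i) \<le> (\<Prod>i\<in>UNIV. AL i)"
    proof (rule prod_mono_ennreal)
      fix i :: 'n
      have "ennreal (exp (-1)) * NL i \<le> ennreal (exp (-1)) * (ennreal (exp 1) * AL i)"
        using cb[of i] by (intro mult_left_mono) auto
      also have "\<dots> = ennreal (exp (-1) * exp 1) * AL i" by (simp add: ennreal_mult mult.assoc)
      also have "\<dots> = AL i" by (simp add: exp_minus)
      finally show "ennreal (exp (-1)) * NL i \<le> AL i" .
    qed
    moreover have "(\<Prod>i\<in>UNIV. ennreal (exp (-1)) * NL i) = ennreal (exp (- real CARD('n))) * ennreal Z"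
    proof -
      have "(\<Prod>i\<in>UNIV. ennreal (exp (-1)) * NL i) = ennreal (exp (-1)) ^ CARD('n) * (\<Prod>i\<in>UNIV. NL i)"
        by (simp add: prod.distrib)
      also have "ennreal (exp (-1)) ^ CARD('n) = ennreal (exp (- real CARD('n)))"
        by (simp add: ennreal_power exp_of_nat_mult[symmetric])
      finally show ?thesis unfolding IZ .
    qed
    ultimately have "ennreal (1/Z) * (ennreal (exp (- real CARD('n))) * ennreal Z) \<le> emeasure (pi_star \<kappa> h i1) \<Omega>"
      unfolding emeq by (intro mult_left_mono) auto
    moreover have "ennreal (1/Z) * (ennreal (exp (- real CARD('n))) * ennreal Z) = ennreal (exp (- real CARD('n)))"
      using Z0 by (simp add: ennreal_mult[symmetric])
    ultimately show ?thesis by simp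
  qed
  have up: "emeasure (pi_star \<kappa> h i1) \<Omega> < \<infinity>"
  proof -
    have "(\<Prod>i\<in>UNIV. AL i) \<le> (\<Prod>i\<in>UNIV. NL i)" by (rule prod_mono_ennreal) (rule AN)
    then have "(\<Prod>i\<in>UNIV. AL i) < \<infinity>" using Ifin by (meson le_less_trans)
    then show ?thesis unfolding emeq by (simp add: ennreal_mult_less_top)
  qed
  have "exp (- real CARD('n)) \<le> measure (pi_star \<kappa> h i1) \<Omega>"
  proof -
    have "emeasure (pi_star \<kappa> h i1) \<Omega> = ennreal (measure (pi_star \<kappa> h i1) \<Omega>)"
      using up by (intro emeasure_eq_ennreal_measure) simp
    then have "ennreal (exp (- real CARD('n))) \<le> ennreal (measure (pi_star \<kappa> h i1) \<Omega>)" using low by simp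
    then show ?thesis by (simp add: ennreal_le_iff measure_nonneg)
  qed
  then show ?thesis using grad unfolding \<Omega>_def by blast
qed

end
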